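(* For positive integers $s$ and $D\ge0$, the polynomial $p_{s,D}(z):=\mathbb{E}_{Y_1,\dots,Y_s}\big[T_{D_s}(z)\,\mathbf{1}\{|D_s|\le D\}\big]$ has degree at most $D$ and all its coefficients have absolute value at most $2^{2D}$.
   Context: $Y_1,\dots,Y_s$ are i.i.d. uniform $\pm1$ random variables and $D_s:=\sum_{i=1}^sY_i$. $T_k$ is the Chebyshev polynomial of the first kind ($T_0=1$, $T_1=z$, $T_{k+1}=2zT_k-T_{k-1}$), extended to negative indices by $T_{-k}=T_k$. *)

theory Defs
  imports "HOL-Computational_Algebra.Polynomial"
begin

fun cheb :: "nat \<Rightarrow> real poly" where
  "cheb 0 = 1"
| "cheb (Suc 0) = [:0, 1:]"
| "cheb (Suc (Suc n)) = [:0, 2:] * cheb (Suc n) - cheb n"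

definition chebT :: "int \<Rightarrow> real poly" where
  "chebT k = cheb (nat \<bar>k\<bar>)"

definition sign_vectors :: "nat \<Rightarrow> int list set" where
  "sign_vectors s = {ys. length ys = s \<and> set ys \<subseteq> {-1, 1}}"

text \<open>p_{s,D}(z) = E[T_{D_s}(z) 1{|D_s| \<le> D}], expectation over the uniform
  distribution on sign vectors (probability 1/2^s each), D_s = sum of the signs.\<close>
definition p_poly :: "nat \<Rightarrow> nat \<Rightarrow> real poly" where
  "p_poly s D = smult (1 / 2 ^ s)
     (\<Sum>ys\<in>sign_vectors s.
        if \<bar>sum_list ys\<bar> \<le> int D then chebT (sum_list ys) else 0)"

end

theory Submission
  imports Defs
begin

lemma cheb_bounds: "degree (cheb n) \<le> n \<and> (\<forall>i. \<bar>coeff (cheb n) i\<bar> \<le> 4 ^ n)"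
proof (induction n rule: cheb.induct)
  case 1 then show ?case by (auto simp: coeff_1)
next
  case 2 then show ?case by (auto simp: coeff_pCons split: nat.splits)
next
  case (3 n)
  have d: "degree (cheb (Suc (Suc n))) \<le> Suc (Suc n)"
  proof -
    have "degree ([:0, 2:] * cheb (Suc n)) \<le> degree [:0, 2::real:] + degree (cheb (Suc n))"
      by (rule degree_mult_le)
    also have "\<dots> \<le> Suc (Suc n)" using 3 by simp
    finally have a: "degree ([:0, 2:] * cheb (Suc n)) \<le> Suc (Suc n)" .
    show ?thesis using degree_diff_le[OF a, of "cheb n"] 3 by simp
  qed
  have c: "\<bar>coeff (cheb (Suc (Suc n))) i\<bar> \<le> 4 ^ Suc (Suc n)" for i
  proof -
    have e: "coeff ([:0, 2:] * cheb (Suc n)) i = (case i of 0 \<Rightarrow> 0 | Suc j \<Rightarrow> 2 * coeff (cheb (Suc n)) j)"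
      by (simp add: mult_pCons_left coeff_pCons split: nat.splits)
    have b1: "\<bar>coeff ([:0, 2:] * cheb (Suc n)) i\<bar> \<le> 2 * 4 ^ Suc n"
    proof (cases i)
      case (Suc j)
      have "\<bar>coeff (cheb (Suc n)) j\<bar> \<le> 4 ^ Suc n" using 3 by blast
      then show ?thesis using Suc by (simp only: e nat.case abs_mult) simp
    qed (simp add: e)
    have b2: "\<bar>coeff (cheb n) i\<bar> \<le> 4 ^ n" using 3 by blast
    have "\<bar>coeff (cheb (Suc (Suc n))) i\<bar> \<le> 2 * 4 ^ Suc n + 4 ^ n"
      using b1 b2 by (simp add: coeff_diff)
    also have "\<dots> \<le> 4 ^ Suc (Suc n)" by simp
    finally show ?thesis .
  qed
  show ?case using d c by blast
qed

lemma sv_finite: "finite (sign_vectors s)"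
proof -
  have "sign_vectors s = {xs. set xs \<subseteq> {-1, 1} \<and> length xs = s}"
    unfolding sign_vectors_def by auto
  then show ?thesis using finite_lists_length_eq[of "{-1,1::int}" s] by simp
qed

lemma sv_card: "card (sign_vectors s) = 2 ^ s"
proof -
  have "sign_vectors s = {xs. set xs \<subseteq> {-1, 1} \<and> length xs = s}"
    unfolding sign_vectors_def by auto
  moreover have c2: "card {-1,1::int} = 2" by simp
  moreover have "card {xs. set xs \<subseteq> {-1,1::int} \<and> length xs = s} = card {-1,1::int} ^ s"
    by (rule card_lists_length_eq) simp
  ultimately show ?thesis by (simp only: c2)
qed

theorem corollary1:
  fixes s D :: nat
  assumes "s \<ge> 1"
  shows "degree (p_poly s D) \<le> D \<and> (\<forall>i. \<bar>coeff (p_poly s D) i\<bar> \<le> 2 ^ (2 * D))"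
proof -
  define f where "f = (\<lambda>ys. if \<bar>sum_list ys\<bar> \<le> int D then chebT (sum_list ys) else 0)"
  have fd: "degree (f ys) \<le> D" for ys
    using cheb_bounds[of "nat \<bar>sum_list ys\<bar>"] by (auto simp: f_def chebT_def)
  have fc: "\<bar>coeff (f ys) i\<bar> \<le> 4 ^ D" for ys i
  proof (cases "\<bar>sum_list ys\<bar> \<le> int D")
    case True
    have "\<bar>coeff (f ys) i\<bar> \<le> 4 ^ nat \<bar>sum_list ys\<bar>"
      using True cheb_bounds[of "nat \<bar>sum_list ys\<bar>"] by (auto simp: f_def chebT_def)
    also have "\<dots> \<le> 4 ^ D" using True by (intro power_increasing) auto
    finally show ?thesis .
  qed (simp add: f_def)
  have pe: "p_poly s D = smult (1 / 2 ^ s) (sum f (sign_vectors s))"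
    unfolding p_poly_def f_def by simp
  have deg: "degree (p_poly s D) \<le> D"
  proof -
    have "degree (sum f (sign_vectors s)) \<le> D" by (rule degree_sum_le[OF sv_finite fd])
    then show ?thesis unfolding pe by (rule order_trans[OF degree_smult_le])
  qed
  have co: "\<bar>coeff (p_poly s D) i\<bar> \<le> 2 ^ (2 * D)" for i
  proof -
    have "\<bar>coeff (p_poly s D) i\<bar> = (1 / 2 ^ s) * \<bar>\<Sum>ys\<in>sign_vectors s. coeff (f ys) i\<bar>"
      unfolding pe by (simp add: coeff_sum abs_mult)
    also have "\<dots> \<le> (1 / 2 ^ s) * (\<Sum>ys\<in>sign_vectors s. \<bar>coeff (f ys) i\<bar>)"
      by (intro mult_left_mono sum_abs) auto
    also have "\<dots> \<le> (1 / 2 ^ s) * (\<Sum>ys\<in>sign_vectors s. 4 ^ D)"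
      by (intro mult_left_mono sum_mono fc) auto
    also have "\<dots> = 4 ^ D" by (simp add: sv_card)
    also have "\<dots> = 2 ^ (2 * D)" by (simp add: power_mult)
    finally show ?thesis .
  qed
  show ?thesis using deg co by blast
qed

end
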